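(* Let $K$ satisfy the standing kernel assumptions with $\varepsilon$ sufficiently small, let $f$ be a self-similar profile for $K$ normalized at $-1$, with desingularized Laplace transform $Q$, and let $U:=Q-\bar Q$ on $(-1,\infty)$, where $\bar Q(q)=q/(1+q)$. Suppose that $U$ satisfies $$-qU'(q)=(2\bar Q(q)-1)U(q)+U(q)^2+\mathcal{M}(f,f)(q)\quad (q>-1)$$ and $U(q)=o\big(\tfrac{1}{1+q}\big)$ as $q\downarrow-1$. Then for all $q>-1$ $$U(q)=-\frac{q}{(1+q)^2}\int_{-1}^q\frac{(1+s)^2}{s^2}\,\psi(s)\,ds,\qquad \psi=U^2+\mathcal{M}(f,f).$$ Furthermore, if $f_1,f_2$ are two such profiles with corresponding $U_1,U_2$, then for all $q>-1$ $$U_1(q)-U_2(q)=-\frac{q}{(1+q)^2}\int_{-1}^q\frac{(1+s)^2}{s^2}\big(U_1(s)^2-U_2(s)^2\big)ds-\frac{q}{(1+q)^2}\int_{-1}^q\frac{(1+s)^2}{s^2}\big(\mathcal{M}(f_1,f_1)(s)-\mathcal{M}(f_2,f_2)(s)\big)ds.$$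
   Context: Standing kernel assumptions: $\alpha\in[0,1)$, $\varepsilon>0$, $C_0>0$; $K:(0,\infty)^2\to[0,\infty)$ is symmetric, homogeneous of degree zero, differentiable, and with $W:=K-2$: $W\ge-\varepsilon$, $W(x,y)\le \varepsilon((x/y)^{\alpha}+(y/x)^{\alpha})$, $|\partial_x K(x,y)|\le \frac{C_0\varepsilon}{x}((x/y)^{\alpha}+(y/x)^{\alpha})$ for all $x,y>0$. A self-similar profile for $K$ is $f\in L^1_{loc}(0,\infty)$, $f\ge0$, $\int_0^\infty xf\,dx<\infty$, with $x^2 f(x)=\int_0^x dy\int_{x-y}^\infty dz\,K(y,z)\,y\,f(y)f(z)$ for a.e. $x>0$. $Q(q)=\int_0^\infty(1-e^{-qx})f(x)\,dx$ wherever $\int_0^\infty e^{-qx}f dx<\infty$; $f$ is normalized at $-1$ if $Q$ is finite on $(-1,\infty)$ and $|Q(q)|\to\infty$ as $q\downarrow-1$. $\mathcal{M}(f,f)(q)=\frac12\int_0^\infty\int_0^\infty W(x,y)f(x)f(y)(1-e^{-qx})(1-e^{-qy})\,dx\,dy$. *)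

theory Defs
  imports "HOL-Analysis.Analysis" "HOL-Library.Landau_Symbols"
begin

definition Wk :: "(real \<Rightarrow> real \<Rightarrow> real) \<Rightarrow> real \<Rightarrow> real \<Rightarrow> real" where
  "Wk K x y = K x y - 2"

definition kernel_assms ::
  "real \<Rightarrow> real \<Rightarrow> real \<Rightarrow> (real \<Rightarrow> real \<Rightarrow> real) \<Rightarrow> bool" where
  "kernel_assms \<alpha> \<epsilon> C0 K \<longleftrightarrow>
     0 \<le> \<alpha> \<and> \<alpha> < 1 \<and> 0 < \<epsilon> \<and> 0 < C0 \<and>
     (\<forall>x>0. \<forall>y>0. K x y \<ge> 0) \<and>
     (\<forall>x>0. \<forall>y>0. K x y = K y x) \<and>
     (\<forall>x>0. \<forall>y>0. \<forall>l>0. K (l * x) (l * y) = K x y) \<and>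
     (\<forall>x>0. \<forall>y>0. (\<lambda>p. K (fst p) (snd p)) differentiable (at (x, y))) \<and>
     (\<forall>x>0. \<forall>y>0. Wk K x y \<ge> - \<epsilon>) \<and>
     (\<forall>x>0. \<forall>y>0. Wk K x y \<le> \<epsilon> * ((x / y) powr \<alpha> + (y / x) powr \<alpha>)) \<and>
     (\<forall>x>0. \<forall>y>0. \<forall>D. ((\<lambda>t. K t y) has_real_derivative D) (at x) \<longrightarrow>
        \<bar>D\<bar> \<le> C0 * \<epsilon> / x * ((x / y) powr \<alpha> + (y / x) powr \<alpha>))"

text \<open>Self-similar profile for K (f is only relevant on (0,infinity)).\<close>
definition self_similar_profile :: "(real \<Rightarrow> real \<Rightarrow> real) \<Rightarrow> (real \<Rightarrow> real) \<Rightarrow> bool" where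
  "self_similar_profile K f \<longleftrightarrow>
     f \<in> borel_measurable lborel \<and>
     (\<forall>x>0. f x \<ge> 0) \<and>
     (\<forall>a b. 0 < a \<and> a \<le> b \<longrightarrow> set_integrable lborel {a..b} f) \<and>
     set_integrable lborel {0<..} (\<lambda>x. x * f x) \<and>
     (AE x in lborel. x > 0 \<longrightarrow>
        ennreal (x\<^sup>2 * f x) =
          (\<integral>\<^sup>+ y. indicator {0<..<x} y *
             (\<integral>\<^sup>+ z. indicator {x - y..} z * ennreal (K y z * y * f y * f z) \<partial>lborel) \<partial>lborel))"

definition Qlap :: "(real \<Rightarrow> real) \<Rightarrow> real \<Rightarrow> real" where
  "Qlap f q = (LINT x:{0<..}|lborel. (1 - exp (- q * x)) * f x)"

definition Qlap_defined :: "(real \<Rightarrow> real) \<Rightarrow> real \<Rightarrow> bool" where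
  "Qlap_defined f q \<longleftrightarrow> set_integrable lborel {0<..} (\<lambda>x. (1 - exp (- q * x)) * f x)"

definition normalized_at_m1 :: "(real \<Rightarrow> real) \<Rightarrow> bool" where
  "normalized_at_m1 f \<longleftrightarrow>
     (\<forall>q>-1. Qlap_defined f q) \<and>
     filterlim (\<lambda>q. \<bar>Qlap f q\<bar>) at_top (at_right (-1))"

definition Qbar :: "real \<Rightarrow> real" where
  "Qbar q = q / (1 + q)"

definition Mff :: "(real \<Rightarrow> real \<Rightarrow> real) \<Rightarrow> (real \<Rightarrow> real) \<Rightarrow> real \<Rightarrow> real" where
  "Mff K f q = 1/2 * (LINT p:({0<..} \<times> {0<..})|(lborel \<Otimes>\<^sub>M lborel).
      Wk K (fst p) (snd p) * f (fst p) * f (snd p) *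
      (1 - exp (- q * fst p)) * (1 - exp (- q * snd p)))"

definition U_hyps :: "(real \<Rightarrow> real \<Rightarrow> real) \<Rightarrow> (real \<Rightarrow> real) \<Rightarrow> bool" where
  "U_hyps K f \<longleftrightarrow>
     (let U = (\<lambda>q. Qlap f q - Qbar q) in
       (\<forall>q>-1. \<exists>D. (U has_real_derivative D) (at q) \<and>
          - q * D = (2 * Qbar q - 1) * U q + (U q)\<^sup>2 + Mff K f q) \<and>
       U \<in> smallo (at_right (- 1)) (\<lambda>q. 1 / (1 + q)))"

end

theory Submission
  imports Defs
begin

lemma set_prod_integral:
  fixes \<phi> :: "real \<Rightarrow> real"
  assumes int: "set_integrable lborel A \<phi>" and A: "A \<in> sets lborel"
  shows "set_integrable (lborel \<Otimes>\<^sub>M lborel) (A \<times> A) (\<lambda>p. \<phi> (fst p) * \<phi> (snd p))"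
    and "(LINT p:A\<times>A|(lborel \<Otimes>\<^sub>M lborel). \<phi> (fst p) * \<phi> (snd p)) = (LINT x:A|lborel. \<phi> x)^2"
proof -
  define \<psi> where "\<psi> x = indicator A x * \<phi> x" for x
  have ip: "integrable lborel \<psi>" using int unfolding set_integrable_def \<psi>_def by simp
  have mp[measurable]: "\<psi> \<in> borel_measurable lborel" using ip by auto
  have eq: "(\<lambda>p. indicator (A\<times>A) p *\<^sub>R (\<phi> (fst p) * \<phi> (snd p))) = (\<lambda>(x,y). \<psi> x * \<psi> y)"
    by (auto simp: \<psi>_def indicator_def fun_eq_iff)
  have I: "integrable (lborel \<Otimes>\<^sub>M lborel) (\<lambda>(x,y). \<psi> x * \<psi> y)"
  proof (rule lborel_pair.Fubini_integrable)
    show "(\<lambda>(x,y). \<psi> x * \<psi> y) \<in> borel_measurable (lborel \<Otimes>\<^sub>M lborel)" by measurable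
    have "(\<lambda>x. \<integral>y. norm ((\<lambda>(x,y). \<psi> x * \<psi> y) (x, y)) \<partial>lborel) = (\<lambda>x. \<bar>\<psi> x\<bar> * (\<integral>y. \<bar>\<psi> y\<bar> \<partial>lborel))"
      by (simp add: abs_mult)
    then show "integrable lborel (\<lambda>x. \<integral>y. norm ((\<lambda>(x,y). \<psi> x * \<psi> y) (x, y)) \<partial>lborel)"
      using ip by simp
    show "AE x in lborel. integrable lborel (\<lambda>y. (\<lambda>(x,y). \<psi> x * \<psi> y) (x, y))"
      using ip by simp
  qed
  then show "set_integrable (lborel \<Otimes>\<^sub>M lborel) (A \<times> A) (\<lambda>p. \<phi> (fst p) * \<phi> (snd p))"
    unfolding set_integrable_def eq .
  have "(LINT p:A\<times>A|(lborel \<Otimes>\<^sub>M lborel). \<phi> (fst p) * \<phi> (snd p)) = integral\<^sup>L (lborel \<Otimes>\<^sub>M lborel) (\<lambda>(x,y). \<psi> x * \<psi> y)"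
    unfolding set_lebesgue_integral_def eq ..
  also have "\<dots> = (\<integral>x. (\<integral>y. \<psi> x * \<psi> y \<partial>lborel) \<partial>lborel)"
    using lborel_pair.integral_fst[of "\<lambda>x y. \<psi> x * \<psi> y"] I by simp
  also have "\<dots> = (\<integral>x. \<psi> x \<partial>lborel)^2" by (simp add: power2_eq_square)
  also have "(\<integral>x. \<psi> x \<partial>lborel) = (LINT x:A|lborel. \<phi> x)"
    unfolding set_lebesgue_integral_def \<psi>_def by simp
  finally show "(LINT p:A\<times>A|(lborel \<Otimes>\<^sub>M lborel). \<phi> (fst p) * \<phi> (snd p)) = (LINT x:A|lborel. \<phi> x)^2" .
qed

lemma sign_prod_exp:
  fixes s x y :: real assumes "x > 0" "y > 0"
  shows "0 \<le> (1 - exp (- s * x)) * (1 - exp (- s * y))"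
proof (cases "s \<ge> 0")
  case True
  have "exp (- s * x) \<le> 1" "exp (- s * y) \<le> 1" using True assms by (auto simp: mult_nonneg_nonneg)
  then show ?thesis by (simp add: mult_nonneg_nonneg)
next
  case False
  have "s * x \<le> 0" "s * y \<le> 0" using False assms by (auto intro!: mult_nonpos_nonneg)
  then have "exp (- s * x) \<ge> 1" "exp (- s * y) \<ge> 1" by auto
  then show ?thesis by (simp add: mult_nonpos_nonpos)
qed

lemma Mff_lower:
  assumes ka: "kernel_assms \<alpha> \<epsilon> C0 K" and qd: "Qlap_defined f s" and fpos: "\<forall>x>0. f x \<ge> 0"
  shows "Mff K f s \<ge> -(\<epsilon>/2) * (Qlap f s)^2"
proof -
  define A :: "real set" where "A = {0<..}"
  define \<phi> where "\<phi> x = (1 - exp (- s * x)) * f x" for x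
  define \<Phi> where "\<Phi> p = Wk K (fst p) (snd p) * f (fst p) * f (snd p) *
      (1 - exp (- s * fst p)) * (1 - exp (- s * snd p))" for p
  have eps: "\<epsilon> > 0" and Wlow: "\<forall>x>0. \<forall>y>0. Wk K x y \<ge> - \<epsilon>" using ka unfolding kernel_assms_def by auto
  have int\<phi>: "set_integrable lborel A \<phi>" using qd unfolding Qlap_defined_def A_def \<phi>_def by simp
  have Q: "Qlap f s = (LINT x:A|lborel. \<phi> x)" unfolding Qlap_def A_def \<phi>_def by simp
  have M: "Mff K f s = 1/2 * (LINT p:A\<times>A|(lborel \<Otimes>\<^sub>M lborel). \<Phi> p)"
    unfolding Mff_def A_def \<Phi>_def by simp
  have pint: "set_integrable (lborel \<Otimes>\<^sub>M lborel) (A \<times> A) (\<lambda>p. \<phi> (fst p) * \<phi> (snd p))"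
   and pval: "(LINT p:A\<times>A|(lborel \<Otimes>\<^sub>M lborel). \<phi> (fst p) * \<phi> (snd p)) = (LINT x:A|lborel. \<phi> x)^2"
    using set_prod_integral[OF int\<phi>] by (auto simp: A_def)
  show ?thesis
  proof (cases "set_integrable (lborel \<Otimes>\<^sub>M lborel) (A \<times> A) \<Phi>")
    case True
    have "(LINT p:A\<times>A|(lborel \<Otimes>\<^sub>M lborel). - \<epsilon> * (\<phi> (fst p) * \<phi> (snd p)))
        \<le> (LINT p:A\<times>A|(lborel \<Otimes>\<^sub>M lborel). \<Phi> p)"
    proof (rule set_integral_mono)
      show "set_integrable (lborel \<Otimes>\<^sub>M lborel) (A \<times> A) (\<lambda>p. - \<epsilon> * (\<phi> (fst p) * \<phi> (snd p)))"
        using pint by (rule set_integrable_mult_right)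
      show "set_integrable (lborel \<Otimes>\<^sub>M lborel) (A \<times> A) \<Phi>" by (rule True)
      fix p assume "p \<in> A \<times> A"
      then obtain x y where p: "p = (x,y)" "x > 0" "y > 0" by (auto simp: A_def)
      have sg: "0 \<le> f x * f y * ((1 - exp (- s * x)) * (1 - exp (- s * y)))"
        using sign_prod_exp[OF p(2,3)] fpos p by (simp add: mult_nonneg_nonneg)
      have "- \<epsilon> * (f x * f y * ((1 - exp (- s * x)) * (1 - exp (- s * y))))
          \<le> Wk K x y * (f x * f y * ((1 - exp (- s * x)) * (1 - exp (- s * y))))"
        using Wlow p sg by (intro mult_right_mono) auto
      then show "- \<epsilon> * (\<phi> (fst p) * \<phi> (snd p)) \<le> \<Phi> p"
        unfolding \<phi>_def \<Phi>_def p by (simp add: algebra_simps)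
    qed
    moreover have "(LINT p:A\<times>A|(lborel \<Otimes>\<^sub>M lborel). - \<epsilon> * (\<phi> (fst p) * \<phi> (snd p)))
       = - \<epsilon> * (LINT p:A\<times>A|(lborel \<Otimes>\<^sub>M lborel). (\<phi> (fst p) * \<phi> (snd p)))"
      by (rule set_integral_mult_right)
    ultimately have "- \<epsilon> * (Qlap f s)^2 \<le> (LINT p:A\<times>A|(lborel \<Otimes>\<^sub>M lborel). \<Phi> p)"
      using pval Q by simp
    then show ?thesis using M by simp
  next
    case False
    then have "(LINT p:A\<times>A|(lborel \<Otimes>\<^sub>M lborel). \<Phi> p) = 0"
      unfolding set_integrable_def set_lebesgue_integral_def by (rule not_integrable_integral_eq)
    then show ?thesis using M eps by simp
  qed
qed

lemma deriv_measurable: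
  fixes G g :: "real \<Rightarrow> real" and Om P :: "real set"
  assumes Om: "open Om" and P: "open P" "Om \<subseteq> P"
    and der: "\<And>s. s \<in> Om \<Longrightarrow> (G has_real_derivative g s) (at s)"
    and cont: "continuous_on P G"
  shows "(\<lambda>s. indicator Om s * g s) \<in> borel_measurable borel"
proof -
  define Gc where "Gc s = indicator P s *\<^sub>R G s" for s
  have Gc: "Gc \<in> borel_measurable borel" unfolding Gc_def
    using borel_measurable_continuous_on_indicator[OF _ cont] P by auto
  define h :: "nat \<Rightarrow> real" where "h n = inverse (real (Suc n))" for n
  define u where "u n s = indicator Om s * ((Gc (s + h n) - Gc s) / h n)" for n s
  have um: "u n \<in> borel_measurable borel" for n
  proof -
    have "(\<lambda>s. Gc (s + h n)) \<in> borel_measurable borel"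
      using Gc by (intro measurable_compose[OF _ Gc]) auto
    then show ?thesis unfolding u_def using Gc Om by (intro borel_measurable_times borel_measurable_divide borel_measurable_diff) auto
  qed
  have hlim: "filterlim h (at 0) sequentially"
    unfolding filterlim_at h_def using LIMSEQ_inverse_real_of_nat by auto
  have conv: "(\<lambda>n. u n s) \<longlonglongrightarrow> indicator Om s * g s" for s
  proof (cases "s \<in> Om")
    case False then show ?thesis by (simp add: u_def)
  next
    case True
    have d: "((\<lambda>t. (G (s + t) - G s) / t) \<longlongrightarrow> g s) (at 0)"
      using der[OF True] unfolding DERIV_def .
    have d2: "(\<lambda>n. (G (s + h n) - G s) / h n) \<longlonglongrightarrow> g s"
      by (rule filterlim_compose[OF d hlim])
    have "((\<lambda>n. s + h n) \<longlongrightarrow> s + 0) sequentially"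
      using hlim unfolding filterlim_at by (intro tendsto_add) auto
    then have "eventually (\<lambda>n. s + h n \<in> P) sequentially"
      using P True by (intro topological_tendstoD) auto
    then have "eventually (\<lambda>n. (G (s + h n) - G s) / h n = u n s) sequentially"
      by eventually_elim (use True P in \<open>auto simp: u_def Gc_def\<close>)
    then show ?thesis using d2 True by (auto intro: Lim_transform_eventually)
  qed
  show ?thesis by (rule borel_measurable_LIMSEQ_real[OF conv um])
qed

lemma abs_int_to_lborel:
  fixes f :: "real \<Rightarrow> real"
  assumes "f absolutely_integrable_on S" "(\<lambda>x. indicator S x * f x) \<in> borel_measurable borel"
  shows "set_integrable lborel S f"
proof -
  have "integrable lebesgue (\<lambda>x. indicator S x *\<^sub>R f x)" using assms(1) unfolding set_integrable_def .
  then show ?thesis unfolding set_integrable_def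
    using integrable_completion[of "\<lambda>x. indicator S x *\<^sub>R f x" lborel] assms(2) by auto
qed

lemma val_alg:
  fixes s D u m :: real
  assumes s: "s > -1" "s \<noteq> 0" and Dv: "- s * D = (2 * Qbar s - 1) * u + u\<^sup>2 + m"
  shows "(2 * (1 + s)) * (u / s) + ((D * s - u * 1) / (s * s)) * (1 + s)\<^sup>2 = - ((1 + s)\<^sup>2 / s\<^sup>2 * (u\<^sup>2 + m))"
proof -
  have s1: "1 + s \<noteq> 0" using s by auto
  define X where "X = (2 * Qbar s - 1) * u + u\<^sup>2 + m"
  have Ds: "D * s = - X" using Dv unfolding X_def by (simp add: algebra_simps)
  have q: "(2 * Qbar s - 1) * (1 + s) = s - 1" using s1 unfolding Qbar_def by (simp add: field_simps)
  have X: "X * (1 + s)\<^sup>2 = (s - 1) * (1 + s) * u + (1 + s)\<^sup>2 * (u\<^sup>2 + m)"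
  proof -
    have "X * (1 + s)\<^sup>2 = ((2 * Qbar s - 1) * (1 + s)) * (1 + s) * u + (1 + s)\<^sup>2 * (u\<^sup>2 + m)"
      unfolding X_def by (simp add: power2_eq_square algebra_simps)
    then show ?thesis unfolding q .
  qed
  have "(2 * (1 + s)) * (u / s) + ((D * s - u * 1) / (s * s)) * (1 + s)\<^sup>2
      = (2 * (1 + s) * u * s + (D * s - u) * (1 + s)\<^sup>2) / (s * s)"
    using s by (simp add: field_simps)
  also have "\<dots> = (2 * (1 + s) * u * s - X * (1 + s)\<^sup>2 - u * (1 + s)\<^sup>2) / (s * s)"
    unfolding Ds by (simp add: algebra_simps)
  also have "\<dots> = (2 * (1 + s) * u * s - ((s - 1) * (1 + s) * u + (1 + s)\<^sup>2 * (u\<^sup>2 + m)) - u * (1 + s)\<^sup>2) / (s * s)"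
    unfolding X ..
  also have "\<dots> = - ((1 + s)\<^sup>2 * (u\<^sup>2 + m)) / (s * s)"
    by (simp add: power2_eq_square algebra_simps)
  also have "\<dots> = - ((1 + s)\<^sup>2 / s\<^sup>2 * (u\<^sup>2 + m))"
    by (simp add: power2_eq_square)
  finally show ?thesis .
qed

lemma core:
  fixes U M :: "real \<Rightarrow> real" and e q :: real
  assumes U0: "U 0 = 0"
    and ode: "\<forall>s>-1. \<exists>D. (U has_real_derivative D) (at s) \<and>
          - s * D = (2 * Qbar s - 1) * U s + (U s)\<^sup>2 + M s"
    and small: "((\<lambda>s. (1 + s) * U s) \<longlongrightarrow> 0) (at_right (-1))"
    and Mlow: "\<forall>s>-1. M s \<ge> - e * (U s + Qbar s)\<^sup>2"
    and e: "e \<ge> 0" and q: "q > -1"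
  shows "\<forall>a. -1 < a \<and> a \<le> q \<longrightarrow> set_integrable lborel {a..q} (\<lambda>s. (1 + s)\<^sup>2 / s\<^sup>2 * ((U s)\<^sup>2 + M s))"
    and "\<exists>I. ((\<lambda>a. LINT s:{a..q}|lborel. (1 + s)\<^sup>2 / s\<^sup>2 * ((U s)\<^sup>2 + M s)) \<longlongrightarrow> I) (at_right (-1))
            \<and> U q = - q / (1 + q)\<^sup>2 * I"
    and "\<forall>a. -1 < a \<and> a \<le> q \<longrightarrow> set_integrable lborel {a..q} (\<lambda>s. (1 + s)\<^sup>2 / s\<^sup>2 * (U s)\<^sup>2)"
    and "\<exists>I. ((\<lambda>a. LINT s:{a..q}|lborel. (1 + s)\<^sup>2 / s\<^sup>2 * (U s)\<^sup>2) \<longlongrightarrow> I) (at_right (-1))"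
proof -
  obtain D0 where D0: "(U has_real_derivative D0) (at 0)" using ode by force
  define V where "V s = (if s = 0 then D0 else U s / s)" for s
  define G where "G s = (1 + s)\<^sup>2 * V s" for s
  define h where "h s = (1 + s)\<^sup>2 / s\<^sup>2 * ((U s)\<^sup>2 + M s)" for s
  have Vc: "isCont V s" if sg: "s > -1" for s
  proof (cases "s = 0")
    case True
    have "((\<lambda>y. (U y - U 0) / (y - 0)) \<longlongrightarrow> D0) (at 0)"
      using D0 unfolding has_field_derivative_iff .
    moreover have "eventually (\<lambda>y. (U y - U 0) / (y - 0) = V y) (at 0)"
      by (auto simp: eventually_at_filter V_def U0)
    ultimately have "(V \<longlongrightarrow> D0) (at 0)" using Lim_transform_eventually by blast
    then show ?thesis using True by (simp add: continuous_at V_def)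
  next
    case False
    obtain D where "(U has_real_derivative D) (at s)" using ode sg by force
    then have "isCont U s" by (rule DERIV_isCont)
    then have "isCont (\<lambda>t. U t / t) s" using False by (intro continuous_intros) auto
    moreover have "eventually (\<lambda>t. U t / t = V t) (nhds s)"
      using t1_space_nhds[OF False] by eventually_elim (auto simp: V_def)
    ultimately show ?thesis by (metis isCont_cong)
  qed
  have Gc: "isCont G s" if "s > -1" for s
    unfolding G_def using Vc[OF that] by (intro continuous_intros) auto
  have Gd: "(G has_real_derivative - h s) (at s)" if sg: "s > -1" "s \<noteq> 0" for s
  proof -
    obtain D where dU: "(U has_real_derivative D) (at s)"
      and eq: "- s * D = (2 * Qbar s - 1) * U s + (U s)\<^sup>2 + M s" using ode sg by force
    have d1: "((\<lambda>t. (1 + t)\<^sup>2) has_real_derivative 2 * (1 + s)) (at s)"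
      by (auto intro!: derivative_eq_intros)
    have d2: "((\<lambda>t. U t / t) has_real_derivative (D * s - U s * 1) / (s * s)) (at s)"
      by (rule DERIV_divide[OF dU DERIV_ident]) (use that in auto)
    have d3: "((\<lambda>t. (1 + t)\<^sup>2 * (U t / t)) has_real_derivative
        (2 * (1 + s)) * (U s / s) + ((D * s - U s * 1) / (s * s)) * (1 + s)\<^sup>2) (at s)"
      by (rule DERIV_mult[OF d1 d2])
    have val: "(2 * (1 + s)) * (U s / s) + ((D * s - U s * 1) / (s * s)) * (1 + s)\<^sup>2 = - h s"
      unfolding h_def by (rule val_alg[OF sg eq])
    show ?thesis
    proof (rule has_field_derivative_transform_within_open[OF d3[unfolded val], of "- {0}"])
      show "open (- {0::real})" by auto
      show "s \<in> - {0}" using that by auto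
      fix t :: real assume "t \<in> - {0}"
      then show "(1 + t)\<^sup>2 * (U t / t) = G t" by (simp add: G_def V_def)
    qed
  qed
  have Gcont: "continuous_on {a..b} G" if "-1 < a" for a b
    using Gc that by (intro continuous_at_imp_continuous_on) auto
  have hI: "(h has_integral G a - G q) {a..q}" if a: "-1 < a" "a \<le> q" for a
  proof -
    have "((\<lambda>s. - h s) has_integral G q - G a) {a..q}"
    proof (rule fundamental_theorem_of_calculus_interior_strong[of "{0}"])
      show "(G has_vector_derivative - h x) (at x)" if "x \<in> {a<..<q} - {0}" for x
        using Gd[of x] that a unfolding has_real_derivative_iff_has_vector_derivative by auto
    qed (use a Gcont[OF a(1)] in auto)
    from has_integral_neg[OF this] show ?thesis by simp
  qed
  define b where "b s = - e * (1 + s)\<^sup>2 * (V s + 1 / (1 + s))\<^sup>2" for s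
  have bc: "continuous_on {a..q} b" if "-1 < a" for a
    unfolding b_def using Vc that
    by (intro continuous_intros continuous_at_imp_continuous_on ballI) auto
  have hb: "b s \<le> h s" if "s > -1" for s
  proof (cases "s = 0")
    case True then show ?thesis using e by (simp add: b_def h_def)
  next
    case False
    have s1: "1 + s \<noteq> 0" using that by auto
    have "(U s + Qbar s) / s = V s + 1 / (1 + s)"
      using False s1 by (simp add: V_def Qbar_def field_simps)
    then have eqb: "b s = (1 + s)\<^sup>2 / s\<^sup>2 * (- e * (U s + Qbar s)\<^sup>2)"
      unfolding b_def by (metis (no_types, lifting) mult.commute mult.left_commute power_divide times_divide_eq_left times_divide_eq_right)
    have "(1 + s)\<^sup>2 / s\<^sup>2 * (- e * (U s + Qbar s)\<^sup>2) \<le> (1 + s)\<^sup>2 / s\<^sup>2 * ((U s)\<^sup>2 + M s)"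
      using Mlow that by (intro mult_left_mono) (auto intro: add_increasing)
    then show ?thesis unfolding eqb h_def .
  qed
  define Om where "Om = {-1<..} - {0::real}"
  have hm0: "(\<lambda>s. indicator Om s * - h s) \<in> borel_measurable borel"
  proof (rule deriv_measurable[where P="{-1<..}" and G=G])
    show "open Om" unfolding Om_def by auto
    show "(G has_real_derivative - h s) (at s)" if "s \<in> Om" for s
      using Gd that unfolding Om_def by auto
    show "continuous_on {-1<..} G" using Gc by (intro continuous_at_imp_continuous_on) auto
  qed (auto simp: Om_def)
  have hmeas: "(\<lambda>s. indicator {a..q} s * h s) \<in> borel_measurable borel" if "-1 < a" for a
  proof -
    have "(\<lambda>s. indicator {a..q} s * h s) = (\<lambda>s. indicator {a..q} s * (- (indicator Om s * - h s)))"
      using that by (auto simp: fun_eq_iff Om_def h_def indicator_def)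
    then show ?thesis using hm0 by simp
  qed
  have hint: "set_integrable lborel {a..q} h" and hval: "(LINT s:{a..q}|lborel. h s) = G a - G q"
    if a: "-1 < a" "a \<le> q" for a
  proof -
    have "h absolutely_integrable_on {a..q}"
      by (rule absolutely_integrable_absolutely_integrable_lbound[OF _ absolutely_integrable_continuous_real[OF bc[OF a(1)]]])
        (use hI[OF a] hb a in auto)
    then show si: "set_integrable lborel {a..q} h" by (rule abs_int_to_lborel[OF _ hmeas[OF a(1)]])
    show "(LINT s:{a..q}|lborel. h s) = G a - G q"
      using set_borel_integral_eq_integral(2)[OF si] hI[OF a] by (simp add: integral_unique)
  qed
  show "\<forall>a. -1 < a \<and> a \<le> q \<longrightarrow> set_integrable lborel {a..q} (\<lambda>s. (1 + s)\<^sup>2 / s\<^sup>2 * ((U s)\<^sup>2 + M s))"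
    using hint unfolding h_def by auto
  have Glim: "(G \<longlongrightarrow> 0) (at_right (-1))"
  proof -
    have l2: "((\<lambda>a. (1 + a) / a) \<longlongrightarrow> (1 + -1) / -1) (at_right (-1::real))"
      by (intro tendsto_intros) auto
    have tl: "((\<lambda>a. ((1 + a) * U a) * ((1 + a) / a)) \<longlongrightarrow> 0 * ((1 + -1) / -1)) (at_right (-1::real))"
      by (rule tendsto_mult[OF small l2])
    have ev: "eventually (\<lambda>x. x \<in> {-1<..<0}) (at_right (-1::real))"
      by (rule eventually_at_right_real) simp
    have "eventually (\<lambda>a. ((1 + a) * U a) * ((1 + a) / a) = G a) (at_right (-1::real))"
      using ev by eventually_elim (auto simp: G_def V_def power2_eq_square)
    with tl show ?thesis using Lim_transform_eventually by fastforce
  qed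
  have Llim: "((\<lambda>a. LINT s:{a..q}|lborel. h s) \<longlongrightarrow> 0 - G q) (at_right (-1))"
  proof -
    have "((\<lambda>a. G a - G q) \<longlongrightarrow> 0 - G q) (at_right (-1))" by (intro tendsto_intros Glim)
    moreover have "eventually (\<lambda>a. G a - G q = (LINT s:{a..q}|lborel. h s)) (at_right (-1))"
      using eventually_at_right_real[OF q] by eventually_elim (use hval in auto)
    ultimately show ?thesis using Lim_transform_eventually by fastforce
  qed
  have Uq: "U q = - q / (1 + q)\<^sup>2 * (0 - G q)"
  proof (cases "q = 0")
    case True then show ?thesis using U0 by simp
  next
    case False
    have s1: "(1 + q)\<^sup>2 \<noteq> 0" using q by auto
    have "- q / (1 + q)\<^sup>2 * (0 - G q) = q / (1 + q)\<^sup>2 * ((1 + q)\<^sup>2 * (U q / q))"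
      by (simp add: G_def V_def False)
    also have "\<dots> = U q" using s1 False by simp
    finally show ?thesis by simp
  qed
  show "\<exists>I. ((\<lambda>a. LINT s:{a..q}|lborel. (1 + s)\<^sup>2 / s\<^sup>2 * ((U s)\<^sup>2 + M s)) \<longlongrightarrow> I) (at_right (-1))
            \<and> U q = - q / (1 + q)\<^sup>2 * I"
    using Llim Uq unfolding h_def by blast
  define c where "c s = (1 + s)\<^sup>2 / s\<^sup>2 * (U s)\<^sup>2" for s
  define ct where "ct s = ((1 + s) * V s)\<^sup>2" for s
  define cx where "cx s = (if s \<le> -1 then 0 else ct s)" for s
  have cct: "c s = ct s" if "s \<noteq> 0" for s
    using that by (simp add: c_def ct_def V_def power_divide power_mult_distrib)
  have ctc: "isCont ct s" if "s > -1" for s unfolding ct_def using Vc[OF that] by (intro continuous_intros)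
  have ct_lim: "(ct \<longlongrightarrow> 0) (at_right (-1))"
  proof -
    have l2: "((\<lambda>a. 1 / a) \<longlongrightarrow> 1 / -1) (at_right (-1::real))"
      by (intro tendsto_intros) auto
    have tl: "((\<lambda>a. (((1 + a) * U a) * (1 / a))\<^sup>2) \<longlongrightarrow> (0 * (1 / -1))\<^sup>2) (at_right (-1::real))"
      by (intro tendsto_power tendsto_mult[OF small l2])
    have ev: "eventually (\<lambda>x. x \<in> {-1<..<0}) (at_right (-1::real))"
      by (rule eventually_at_right_real) simp
    have "eventually (\<lambda>a. (((1 + a) * U a) * (1 / a))\<^sup>2 = ct a) (at_right (-1::real))"
      using ev by eventually_elim (auto simp: ct_def V_def)
    with tl show ?thesis using Lim_transform_eventually by fastforce
  qed
  have cxc: "continuous_on {-1..q} cx"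
  proof (clarsimp simp: continuous_on_eq_continuous_within)
    fix x :: real assume x: "-1 \<le> x" "x \<le> q"
    show "continuous (at x within {-1..q}) cx"
    proof (cases "x = -1")
      case True
      have "(ct \<longlongrightarrow> 0) (at (-1) within {-1..q})" using ct_lim at_within_Icc_at_right[OF q] by simp
      moreover have "eventually (\<lambda>y. ct y = cx y) (at (-1) within {-1..q})"
        by (auto simp: eventually_at_filter cx_def)
      ultimately have "(cx \<longlongrightarrow> 0) (at (-1) within {-1..q})" using Lim_transform_eventually by fastforce
      then show ?thesis using True by (simp add: continuous_within cx_def)
    next
      case False
      then have xg: "x > -1" using x by auto
      have "eventually (\<lambda>y. y \<in> {-1<..}) (nhds x)" using xg by (intro eventually_nhds_in_open) auto
      then have "eventually (\<lambda>y. ct y = cx y) (nhds x)" by eventually_elim (auto simp: cx_def)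
      then have "isCont cx x" using ctc[OF xg] isCont_cong by metis
      then show ?thesis by (rule continuous_at_imp_continuous_within)
    qed
  qed
  have cint: "c integrable_on {a..q}" and cval: "integral {a..q} c = integral {a..q} cx"
    if a: "-1 < a" "a \<le> q" for a
  proof -
    have e1: "cx x = c x" if "x \<in> {a..q} - {0}" for x using that a cct by (auto simp: cx_def)
    have "cx integrable_on {a..q}"
      by (rule integrable_continuous_interval[OF continuous_on_subset[OF cxc]]) (use a in auto)
    then show "c integrable_on {a..q}" using integrable_spike_finite[of "{0}" "{a..q}" c cx] e1 by auto
    show "integral {a..q} c = integral {a..q} cx" by (rule integral_spike[of "{0}"]) (use e1 in auto)
  qed
  have Vm: "(\<lambda>s. indicator {-1<..} s * V s) \<in> borel_measurable borel"
    using borel_measurable_continuous_on_indicator[of "{-1<..}" V] Vc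
    by (auto intro: continuous_at_imp_continuous_on)
  have cmeas: "(\<lambda>s. indicator {a..q} s * c s) \<in> borel_measurable borel" if a: "-1 < a" for a
  proof -
    have "(\<lambda>s. indicator {a..q} s * c s) =
      (\<lambda>s. indicator {a..q} s * ((1 + s)\<^sup>2 * (indicator {-1<..} s * V s - indicator {0} s * D0)\<^sup>2))"
    proof
      fix s show "indicator {a..q} s * c s =
        indicator {a..q} s * ((1 + s)\<^sup>2 * (indicator {-1<..} s * V s - indicator {0} s * D0)\<^sup>2)"
        using a cct[of s] by (cases "s = 0") (auto simp: indicator_def c_def ct_def V_def power_mult_distrib power_divide)
    qed
    then show ?thesis using Vm by simp
  qed
  have cset: "set_integrable lborel {a..q} c" if a: "-1 < a" "a \<le> q" for a
  proof -
    have "c absolutely_integrable_on {a..q}"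
      by (rule nonnegative_absolutely_integrable_1[OF cint[OF a]]) (simp add: c_def)
    then show ?thesis by (rule abs_int_to_lborel[OF _ cmeas[OF a(1)]])
  qed
  show "\<forall>a. -1 < a \<and> a \<le> q \<longrightarrow> set_integrable lborel {a..q} (\<lambda>s. (1 + s)\<^sup>2 / s\<^sup>2 * (U s)\<^sup>2)"
    using cset unfolding c_def by auto
  have cxi: "cx integrable_on {-1..q}" by (rule integrable_continuous_interval[OF cxc])
  have "continuous_on {-1..q} (\<lambda>a. integral {a..q} cx)" by (rule indefinite_integral_continuous_1'[OF cxi])
  then have "((\<lambda>a. integral {a..q} cx) \<longlongrightarrow> integral {-1..q} cx) (at (-1) within {-1..q})"
    using q by (auto simp: continuous_on_eq_continuous_within continuous_within)
  then have L: "((\<lambda>a. integral {a..q} cx) \<longlongrightarrow> integral {-1..q} cx) (at_right (-1))"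
    using at_within_Icc_at_right[OF q] by simp
  have "eventually (\<lambda>a. integral {a..q} cx = (LINT s:{a..q}|lborel. c s)) (at_right (-1))"
    using eventually_at_right_real[OF q] 
  proof eventually_elim
    case (elim a)
    then have "-1 < a" "a \<le> q" by auto
    then show ?case using cval[of a] set_borel_integral_eq_integral(2)[OF cset[of a]] by simp
  qed
  with L have "((\<lambda>a. LINT s:{a..q}|lborel. c s) \<longlongrightarrow> integral {-1..q} cx) (at_right (-1))"
    using Lim_transform_eventually by fastforce
  then show "\<exists>I. ((\<lambda>a. LINT s:{a..q}|lborel. (1 + s)\<^sup>2 / s\<^sup>2 * (U s)\<^sup>2) \<longlongrightarrow> I) (at_right (-1))"
    unfolding c_def by blast
qed

lemma profile_core:
  assumes ka: "kernel_assms \<alpha> \<epsilon> C0 K" and sp: "self_similar_profile K f"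
    and nm: "normalized_at_m1 f" and uh: "U_hyps K f" and q: "q > -1"
  shows "\<forall>a. -1 < a \<and> a \<le> q \<longrightarrow> set_integrable lborel {a..q}
            (\<lambda>s. (1 + s)\<^sup>2 / s\<^sup>2 * ((Qlap f s - Qbar s)\<^sup>2 + Mff K f s))"
    and "\<exists>I. ((\<lambda>a. LINT s:{a..q}|lborel. (1 + s)\<^sup>2 / s\<^sup>2 * ((Qlap f s - Qbar s)\<^sup>2 + Mff K f s)) \<longlongrightarrow> I) (at_right (-1))
            \<and> Qlap f q - Qbar q = - q / (1 + q)\<^sup>2 * I"
    and "\<forall>a. -1 < a \<and> a \<le> q \<longrightarrow> set_integrable lborel {a..q} (\<lambda>s. (1 + s)\<^sup>2 / s\<^sup>2 * (Qlap f s - Qbar s)\<^sup>2)"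
    and "\<exists>I. ((\<lambda>a. LINT s:{a..q}|lborel. (1 + s)\<^sup>2 / s\<^sup>2 * (Qlap f s - Qbar s)\<^sup>2) \<longlongrightarrow> I) (at_right (-1))"
proof -
  define U where "U s = Qlap f s - Qbar s" for s
  have eps: "\<epsilon> > 0" using ka unfolding kernel_assms_def by auto
  have fpos: "\<forall>x>0. f x \<ge> 0" using sp unfolding self_similar_profile_def by auto
  have U0: "U 0 = 0" by (simp add: U_def Qlap_def Qbar_def)
  have ode: "\<forall>s>-1. \<exists>D. (U has_real_derivative D) (at s) \<and>
          - s * D = (2 * Qbar s - 1) * U s + (U s)\<^sup>2 + Mff K f s"
    and so: "U \<in> o[at_right (- 1)](\<lambda>q. 1 / (1 + q))"
    using uh unfolding U_hyps_def U_def Let_def by auto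
  have "((\<lambda>s. U s / (1 / (1 + s))) \<longlongrightarrow> 0) (at_right (-1))" by (rule smalloD_tendsto[OF so])
  then have small: "((\<lambda>s. (1 + s) * U s) \<longlongrightarrow> 0) (at_right (-1))" by (simp add: mult.commute)
  have Mlow: "\<forall>s>-1. Mff K f s \<ge> - (\<epsilon>/2) * (U s + Qbar s)\<^sup>2"
  proof (intro allI impI)
    fix s :: real assume "s > -1"
    then have "Qlap_defined f s" using nm unfolding normalized_at_m1_def by auto
    from Mff_lower[OF ka this fpos] show "Mff K f s \<ge> - (\<epsilon>/2) * (U s + Qbar s)\<^sup>2" by (simp add: U_def)
  qed
  note C = core[OF U0 ode small Mlow _ q]
  from C eps show "\<forall>a. -1 < a \<and> a \<le> q \<longrightarrow> set_integrable lborel {a..q}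
            (\<lambda>s. (1 + s)\<^sup>2 / s\<^sup>2 * ((Qlap f s - Qbar s)\<^sup>2 + Mff K f s))"
    "\<exists>I. ((\<lambda>a. LINT s:{a..q}|lborel. (1 + s)\<^sup>2 / s\<^sup>2 * ((Qlap f s - Qbar s)\<^sup>2 + Mff K f s)) \<longlongrightarrow> I) (at_right (-1))
            \<and> Qlap f q - Qbar q = - q / (1 + q)\<^sup>2 * I"
    "\<forall>a. -1 < a \<and> a \<le> q \<longrightarrow> set_integrable lborel {a..q} (\<lambda>s. (1 + s)\<^sup>2 / s\<^sup>2 * (Qlap f s - Qbar s)\<^sup>2)"
    "\<exists>I. ((\<lambda>a. LINT s:{a..q}|lborel. (1 + s)\<^sup>2 / s\<^sup>2 * (Qlap f s - Qbar s)\<^sup>2) \<longlongrightarrow> I) (at_right (-1))"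
    unfolding U_def by auto
qed

theorem lemma3p2:
  "\<forall>\<alpha> C0. 0 \<le> \<alpha> \<and> \<alpha> < 1 \<and> 0 < C0 \<longrightarrow>
   (\<exists>\<epsilon>0>0. \<forall>\<epsilon> K. 0 < \<epsilon> \<and> \<epsilon> < \<epsilon>0 \<and> kernel_assms \<alpha> \<epsilon> C0 K \<longrightarrow>
     (\<forall>f. self_similar_profile K f \<and> normalized_at_m1 f \<and> U_hyps K f \<longrightarrow>
        (\<forall>q>-1.
           (\<forall>a. -1 < a \<and> a \<le> q \<longrightarrow>
              set_integrable lborel {a..q}
                (\<lambda>s. (1 + s)\<^sup>2 / s\<^sup>2 * ((Qlap f s - Qbar s)\<^sup>2 + Mff K f s))) \<and>
           (\<exists>I. ((\<lambda>a. LINT s:{a..q}|lborel. (1 + s)\<^sup>2 / s\<^sup>2 * ((Qlap f s - Qbar s)\<^sup>2 + Mff K f s))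
                    \<longlongrightarrow> I) (at_right (-1)) \<and>
                Qlap f q - Qbar q = - q / (1 + q)\<^sup>2 * I))) \<and>
     (\<forall>f1 f2. self_similar_profile K f1 \<and> normalized_at_m1 f1 \<and> U_hyps K f1 \<and>
              self_similar_profile K f2 \<and> normalized_at_m1 f2 \<and> U_hyps K f2 \<longrightarrow>
        (\<forall>q>-1.
           (\<exists>I1 I2.
              ((\<lambda>a. LINT s:{a..q}|lborel. (1 + s)\<^sup>2 / s\<^sup>2 *
                   ((Qlap f1 s - Qbar s)\<^sup>2 - (Qlap f2 s - Qbar s)\<^sup>2)) \<longlongrightarrow> I1) (at_right (-1)) \<and>
              ((\<lambda>a. LINT s:{a..q}|lborel. (1 + s)\<^sup>2 / s\<^sup>2 *
                   (Mff K f1 s - Mff K f2 s)) \<longlongrightarrow> I2) (at_right (-1)) \<and>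
              (Qlap f1 q - Qbar q) - (Qlap f2 q - Qbar q) =
                 - q / (1 + q)\<^sup>2 * I1 - q / (1 + q)\<^sup>2 * I2))))"
  apply (rule allI)+
  apply (rule impI)
  apply (rule exI[of _ 1])
  apply (rule conjI)
   apply simp
  apply (rule allI)+
  apply (rule impI)
  apply (rule conjI)
  subgoal for \<alpha> C0 \<epsilon> K
    apply (rule allI, rule impI, rule allI, rule impI)
    subgoal for f q using profile_core(1,2)[of \<alpha> \<epsilon> C0 K f q] by auto
    done
  apply (rule allI, rule allI, rule impI, rule allI, rule impI)
  subgoal for \<alpha> C0 \<epsilon> K f1 f2 q
  proof -
    assume "0 < \<epsilon> \<and> \<epsilon> < 1 \<and> kernel_assms \<alpha> \<epsilon> C0 K"
    then have ka: "kernel_assms \<alpha> \<epsilon> C0 K" by auto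
    assume "self_similar_profile K f1 \<and> normalized_at_m1 f1 \<and> U_hyps K f1 \<and>
              self_similar_profile K f2 \<and> normalized_at_m1 f2 \<and> U_hyps K f2" and q: "q > -1"
    then have H1: "self_similar_profile K f1" "normalized_at_m1 f1" "U_hyps K f1"
      and H2: "self_similar_profile K f2" "normalized_at_m1 f2" "U_hyps K f2" by auto
    note P1 = profile_core[OF ka H1 q] and P2 = profile_core[OF ka H2 q]
    define k :: "real \<Rightarrow> real" where "k s = (1 + s)\<^sup>2 / s\<^sup>2" for s
    define u1 where "u1 s = Qlap f1 s - Qbar s" for s
    define u2 where "u2 s = Qlap f2 s - Qbar s" for s
    define m1 where "m1 = Mff K f1"
    define m2 where "m2 = Mff K f2"
    have hi1: "set_integrable lborel {a..q} (\<lambda>s. k s * ((u1 s)\<^sup>2 + m1 s))" if "-1 < a" "a \<le> q" for a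
      using P1(1) that unfolding k_def u1_def m1_def by auto
    have hi2: "set_integrable lborel {a..q} (\<lambda>s. k s * ((u2 s)\<^sup>2 + m2 s))" if "-1 < a" "a \<le> q" for a
      using P2(1) that unfolding k_def u2_def m2_def by auto
    have ci1: "set_integrable lborel {a..q} (\<lambda>s. k s * (u1 s)\<^sup>2)" if "-1 < a" "a \<le> q" for a
      using P1(3) that unfolding k_def u1_def by auto
    have ci2: "set_integrable lborel {a..q} (\<lambda>s. k s * (u2 s)\<^sup>2)" if "-1 < a" "a \<le> q" for a
      using P2(3) that unfolding k_def u2_def by auto
    obtain J1 where J1: "((\<lambda>a. LINT s:{a..q}|lborel. k s * ((u1 s)\<^sup>2 + m1 s)) \<longlongrightarrow> J1) (at_right (-1))"
      and U1: "u1 q = - q / (1 + q)\<^sup>2 * J1"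
      using P1(2) unfolding k_def u1_def m1_def by blast
    obtain J2 where J2: "((\<lambda>a. LINT s:{a..q}|lborel. k s * ((u2 s)\<^sup>2 + m2 s)) \<longlongrightarrow> J2) (at_right (-1))"
      and U2: "u2 q = - q / (1 + q)\<^sup>2 * J2"
      using P2(2) unfolding k_def u2_def m2_def by blast
    obtain C1 where C1: "((\<lambda>a. LINT s:{a..q}|lborel. k s * (u1 s)\<^sup>2) \<longlongrightarrow> C1) (at_right (-1))"
      using P1(4) unfolding k_def u1_def by blast
    obtain C2 where C2: "((\<lambda>a. LINT s:{a..q}|lborel. k s * (u2 s)\<^sup>2) \<longlongrightarrow> C2) (at_right (-1))"
      using P2(4) unfolding k_def u2_def by blast
    have ev: "eventually (\<lambda>a. a \<in> {-1<..<q}) (at_right (-1))" using eventually_at_right_real[OF q] .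
    have L1: "((\<lambda>a. LINT s:{a..q}|lborel. k s * ((u1 s)\<^sup>2 - (u2 s)\<^sup>2)) \<longlongrightarrow> C1 - C2) (at_right (-1))"
    proof -
      have "eventually (\<lambda>a. (LINT s:{a..q}|lborel. k s * (u1 s)\<^sup>2) - (LINT s:{a..q}|lborel. k s * (u2 s)\<^sup>2)
          = (LINT s:{a..q}|lborel. k s * ((u1 s)\<^sup>2 - (u2 s)\<^sup>2))) (at_right (-1))"
        using ev
      proof eventually_elim
        case (elim a)
        then have a: "-1 < a" "a \<le> q" by auto
        have "(LINT s:{a..q}|lborel. k s * ((u1 s)\<^sup>2 - (u2 s)\<^sup>2)) =
              (LINT s:{a..q}|lborel. k s * (u1 s)\<^sup>2 - k s * (u2 s)\<^sup>2)"
          by (simp add: right_diff_distrib)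
        also have "\<dots> = (LINT s:{a..q}|lborel. k s * (u1 s)\<^sup>2) - (LINT s:{a..q}|lborel. k s * (u2 s)\<^sup>2)"
          by (rule set_integral_diff(2)[OF ci1[OF a] ci2[OF a]])
        finally show ?case by simp
      qed
      moreover have "((\<lambda>a. (LINT s:{a..q}|lborel. k s * (u1 s)\<^sup>2) - (LINT s:{a..q}|lborel. k s * (u2 s)\<^sup>2))
          \<longlongrightarrow> C1 - C2) (at_right (-1))" by (rule tendsto_diff[OF C1 C2])
      ultimately show ?thesis using Lim_transform_eventually by fastforce
    qed
    have L2: "((\<lambda>a. LINT s:{a..q}|lborel. k s * (m1 s - m2 s)) \<longlongrightarrow> (J1 - C1) - (J2 - C2)) (at_right (-1))"
    proof -
      have "eventually (\<lambda>a. ((LINT s:{a..q}|lborel. k s * ((u1 s)\<^sup>2 + m1 s)) - (LINT s:{a..q}|lborel. k s * (u1 s)\<^sup>2))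
           - ((LINT s:{a..q}|lborel. k s * ((u2 s)\<^sup>2 + m2 s)) - (LINT s:{a..q}|lborel. k s * (u2 s)\<^sup>2))
          = (LINT s:{a..q}|lborel. k s * (m1 s - m2 s))) (at_right (-1))"
        using ev
      proof eventually_elim
        case (elim a)
        then have a: "-1 < a" "a \<le> q" by auto
        have fe: "(\<lambda>s. k s * (m1 s - m2 s)) = (\<lambda>s. (k s * ((u1 s)\<^sup>2 + m1 s) - k s * (u1 s)\<^sup>2)
               - (k s * ((u2 s)\<^sup>2 + m2 s) - k s * (u2 s)\<^sup>2))"
          by (rule ext) (simp add: algebra_simps)
        note d1 = set_integral_diff[OF hi1[OF a] ci1[OF a]]
        note d2 = set_integral_diff[OF hi2[OF a] ci2[OF a]]
        note d3 = set_integral_diff[OF d1(1) d2(1)]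
        show ?case unfolding fe d3(2) d1(2) d2(2) ..
      qed
      moreover have "((\<lambda>a. ((LINT s:{a..q}|lborel. k s * ((u1 s)\<^sup>2 + m1 s)) - (LINT s:{a..q}|lborel. k s * (u1 s)\<^sup>2))
           - ((LINT s:{a..q}|lborel. k s * ((u2 s)\<^sup>2 + m2 s)) - (LINT s:{a..q}|lborel. k s * (u2 s)\<^sup>2)))
          \<longlongrightarrow> (J1 - C1) - (J2 - C2)) (at_right (-1))"
        by (intro tendsto_diff J1 J2 C1 C2)
      ultimately show ?thesis using Lim_transform_eventually by fastforce
    qed
    have fin: "u1 q - u2 q = - q / (1 + q)\<^sup>2 * (C1 - C2) - q / (1 + q)\<^sup>2 * ((J1 - C1) - (J2 - C2))"
    proof -
      define t where "t = q / (1 + q)\<^sup>2"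
      have e: "- q / (1 + q)\<^sup>2 = - t" unfolding t_def by simp
      show ?thesis unfolding U1 U2 e t_def[symmetric] by (simp add: algebra_simps)
    qed
    show "\<exists>I1 I2.
              ((\<lambda>a. LINT s:{a..q}|lborel. (1 + s)\<^sup>2 / s\<^sup>2 *
                   ((Qlap f1 s - Qbar s)\<^sup>2 - (Qlap f2 s - Qbar s)\<^sup>2)) \<longlongrightarrow> I1) (at_right (-1)) \<and>
              ((\<lambda>a. LINT s:{a..q}|lborel. (1 + s)\<^sup>2 / s\<^sup>2 *
                   (Mff K f1 s - Mff K f2 s)) \<longlongrightarrow> I2) (at_right (-1)) \<and>
              (Qlap f1 q - Qbar q) - (Qlap f2 q - Qbar q) =
                 - q / (1 + q)\<^sup>2 * I1 - q / (1 + q)\<^sup>2 * I2"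
      using L1 L2 fin unfolding k_def u1_def u2_def m1_def m2_def by blast
  qed
  done

end
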